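(* For every finite-dimensional complex representation $V$ of $S_n$, \[ \mathrm{ch}\,\mathrm{Ind}\,V=\mathcal F(V)[H], \] where $H=\sum_{\mathbf x\in\mathbf N^n}t^{\mathbf x}=\sum_{k\ge0}h_k(t_1,\dots,t_n)$.
   Context: $S_n$ is regarded as the subgroup of permutation matrices in $\mathrm{GL}_n(\mathbf C)$. $M_n$ is the space of $n\times n$ complex matrices and $P^d(M_n)$ the homogeneous polynomials of degree $d$ in the entries of $Q\in M_n$. For a representation $(\rho,V)$ of $S_n$, $\mathrm{Ind}^dV=\{f\in P^d(M_n)\otimes V: f(wQ)=\rho(w)f(Q)\ \forall w\in S_n,Q\in M_n\}$ (elements viewed as $V$-valued polynomial functions on $M_n$), a polynomial representation of $\mathrm{GL}_n(\mathbf C)$ via $(\mathrm{Ind}^d\rho(g)f)(Q)=f(Qg)$. The character of a polynomial representation $\sigma$ of $\mathrm{GL}_n(\mathbf C)$ is $\mathrm{ch}\,\sigma(t_1,\dots,t_n)=\mathrm{trace}\,\sigma(\mathrm{diag}(t_1,\dots,t_n))$, and $\mathrm{ch}\,\mathrm{Ind}\,V:=\sum_{d\ge0}\mathrm{ch}\,\mathrm{Ind}^dV$, a symmetric formal power series in $t_1,\dots,t_n$. $\mathcal F(V)$ is the Frobenius characteristic of the character of $V$ (so $\mathcal F(V_\mu)=s_\mu$ for Specht modules). For $\mathbf x\in\mathbf N^n$, $t^{\mathbf x}=t_1^{x_1}\dotsb t_n^{x_n}$. Plethysm: if $g$ is a (possibly infinite) sum of monic monomials $t^{\mathbf x_1}+t^{\mathbf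 x_2}+\dotsb$ and $f$ a symmetric function, $f[g]=f(t^{\mathbf x_1},t^{\mathbf x_2},\dots)$. *)

theory Defs
  imports "HOL-Analysis.Analysis" "HOL-Combinatorics.Orbits"
begin

text \<open>The index type 'n stands for {1..n}; matrices in M_n are complex^'n^'n.
  A representation V of S_n of dimension m is modelled on complex^'m.\<close>

definition perm_mat :: "('n::finite \<Rightarrow> 'n) \<Rightarrow> complex^'n^'n" where
  "perm_mat \<sigma> = (\<chi> i j. if i = \<sigma> j then 1 else 0)"

definition diag_mat :: "complex^'n::finite \<Rightarrow> complex^'n^'n" where
  "diag_mat t = (\<chi> i j. if i = j then t $ i else 0)"

definition is_rep :: "(('n::finite \<Rightarrow> 'n) \<Rightarrow> complex^'m::finite^'m) \<Rightarrow> bool" where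
  "is_rep \<rho> \<longleftrightarrow> \<rho> id = mat 1 \<and>
     (\<forall>\<sigma> \<tau>. \<sigma> permutes UNIV \<and> \<tau> permutes UNIV \<longrightarrow> \<rho> (\<sigma> \<circ> \<tau>) = \<rho> \<sigma> ** \<rho> \<tau>)"

definition hom_poly :: "nat \<Rightarrow> (complex^'n::finite^'n \<Rightarrow> complex) \<Rightarrow> bool" where
  "hom_poly d p \<longleftrightarrow> (\<exists>c. p = (\<lambda>Q. \<Sum>e\<in>{e::'n \<Rightarrow> 'n \<Rightarrow> nat. (\<Sum>i\<in>UNIV. \<Sum>j\<in>UNIV. e i j) = d}.
       c e * (\<Prod>i\<in>UNIV. \<Prod>j\<in>UNIV. (Q $ i $ j) ^ e i j)))"

text \<open>P^d(M_n) tensor V, as V-valued polynomial functions.\<close>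
definition PdV :: "nat \<Rightarrow> (complex^'n::finite^'n \<Rightarrow> complex^'m::finite) set" where
  "PdV d = {f. \<forall>k. hom_poly d (\<lambda>Q. f Q $ k)}"

definition Ind :: "nat \<Rightarrow> (('n::finite \<Rightarrow> 'n) \<Rightarrow> complex^'m::finite^'m)
    \<Rightarrow> (complex^'n^'n \<Rightarrow> complex^'m) set" where
  "Ind d \<rho> = {f \<in> PdV d. \<forall>\<sigma> Q. \<sigma> permutes UNIV \<longrightarrow> f (perm_mat \<sigma> ** Q) = \<rho> \<sigma> *v f Q}"

definition Ind_act :: "complex^'n::finite^'n \<Rightarrow> (complex^'n^'n \<Rightarrow> complex^'m::finite)
    \<Rightarrow> (complex^'n^'n \<Rightarrow> complex^'m)" where
  "Ind_act g f = (\<lambda>Q. f (Q ** g))"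

definition lincomb :: "(nat \<Rightarrow> complex) \<Rightarrow> ('a \<Rightarrow> complex^'m::finite) list \<Rightarrow> 'a \<Rightarrow> complex^'m" where
  "lincomb c bs = (\<lambda>x. \<Sum>i<length bs. c i *s (bs ! i) x)"

definition is_basis_of :: "('a \<Rightarrow> complex^'m::finite) set \<Rightarrow> ('a \<Rightarrow> complex^'m) list \<Rightarrow> bool" where
  "is_basis_of W bs \<longleftrightarrow> set bs \<subseteq> W \<and>
     (\<forall>c. lincomb c bs = (\<lambda>x. 0) \<longrightarrow> (\<forall>i<length bs. c i = 0)) \<and>
     (\<forall>f\<in>W. \<exists>c. f = lincomb c bs)"

definition trace_on :: "('a \<Rightarrow> complex^'m::finite) set \<Rightarrow> (('a \<Rightarrow> complex^'m) \<Rightarrow> ('a \<Rightarrow> complex^'m)) \<Rightarrow> complex" where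
  "trace_on W T = (THE s. \<forall>bs M. is_basis_of W bs \<and>
      (\<forall>j<length bs. T (bs ! j) = lincomb (\<lambda>i. M i j) bs) \<longrightarrow> s = (\<Sum>j<length bs. M j j))"

definition ch_Ind :: "nat \<Rightarrow> (('n::finite \<Rightarrow> 'n) \<Rightarrow> complex^'m::finite^'m) \<Rightarrow> complex^'n \<Rightarrow> complex" where
  "ch_Ind d \<rho> t = trace_on (Ind d \<rho>) (Ind_act (diag_mat t))"

text \<open>Formal power series in t_1..t_n, as coefficient functions on exponent vectors N^n.
  Finite product of formal power series (Cauchy product).\<close>
type_synonym 'n mps = "('n \<Rightarrow> nat) \<Rightarrow> complex"

definition mps_prod :: "('c \<Rightarrow> 'n::finite mps) \<Rightarrow> 'c set \<Rightarrow> 'n mps" where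
  "mps_prod F C = (\<lambda>a. \<Sum>b\<in>{b. (\<forall>c. c \<notin> C \<longrightarrow> b c = (\<lambda>_. 0)) \<and> (\<lambda>i. \<Sum>c\<in>C. b c i) = a}.
       \<Prod>c\<in>C. F c (b c))"

text \<open>H = sum over x in N^n of t^x, as a list of monomials indexed by x.
  Plethysm of the power sum p_k with H: p_k[H] = sum over x of (t^x)^k = sum over x of t^(k x).\<close>
definition pk_H :: "nat \<Rightarrow> 'n::finite mps" where
  "pk_H k = (\<lambda>a. of_nat (card {x::'n \<Rightarrow> nat. (\<lambda>i. k * x i) = a}))"

text \<open>Character of V and the plethysm F(V)[H], using
  F(V) = (1/n!) sum over w of chi(w) p_(cycle type of w), with p_lambda = product of
  p_(length of cycle) over the cycles (orbits) of w.\<close>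
definition character :: "(('n::finite \<Rightarrow> 'n) \<Rightarrow> complex^'m::finite^'m) \<Rightarrow> ('n \<Rightarrow> 'n) \<Rightarrow> complex" where
  "character \<rho> \<sigma> = trace (\<rho> \<sigma>)"

definition cycles :: "('n \<Rightarrow> 'n) \<Rightarrow> 'n set set" where
  "cycles \<sigma> = {orbit \<sigma> x | x. True}"

definition p_cycle_type_H :: "('n::finite \<Rightarrow> 'n) \<Rightarrow> 'n mps" where
  "p_cycle_type_H \<sigma> = mps_prod (\<lambda>c. pk_H (card c)) (cycles \<sigma>)"

definition Frob_pleth_H :: "(('n::finite \<Rightarrow> 'n) \<Rightarrow> complex^'m::finite^'m) \<Rightarrow> 'n mps" where
  "Frob_pleth_H \<rho> = (\<lambda>a. (1 / of_nat (fact CARD('n))) *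
      (\<Sum>\<sigma>\<in>{\<sigma>. \<sigma> permutes (UNIV::'n set)}. character \<rho> \<sigma> * p_cycle_type_H \<sigma> a))"

end

theory Submission
  imports Defs "HOL-Computational_Algebra.Polynomial"
begin


definition lc :: "('j \<Rightarrow> complex) \<Rightarrow> 'j set \<Rightarrow> ('j \<Rightarrow> 'a \<Rightarrow> complex^'m::finite) \<Rightarrow> 'a \<Rightarrow> complex^'m" where
  "lc c J u = (\<lambda>x. \<Sum>j\<in>J. c j *s u j x)"

definition indep :: "'j set \<Rightarrow> ('j \<Rightarrow> 'a \<Rightarrow> complex^'m::finite) \<Rightarrow> bool" where
  "indep J u \<longleftrightarrow> (\<forall>c. lc c J u = (\<lambda>_. 0) \<longrightarrow> (\<forall>j\<in>J. c j = 0))"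

lemma lc_nested:
  "lc c R (\<lambda>k. lc (\<lambda>j. D j k) J u) = lc (\<lambda>j. \<Sum>k\<in>R. c k * D j k) J u"
proof -
  have "(\<Sum>k\<in>R. c k * (\<Sum>j\<in>J. D j k * u j x $ i)) = (\<Sum>j\<in>J. (\<Sum>k\<in>R. c k * D j k) * u j x $ i)" for x i
  proof -
    have "(\<Sum>k\<in>R. c k * (\<Sum>j\<in>J. D j k * u j x $ i)) = (\<Sum>k\<in>R. \<Sum>j\<in>J. c k * D j k * u j x $ i)"
      by (simp add: sum_distrib_left mult.assoc)
    also have "\<dots> = (\<Sum>j\<in>J. \<Sum>k\<in>R. c k * D j k * u j x $ i)" by (rule sum.swap)
    also have "\<dots> = (\<Sum>j\<in>J. (\<Sum>k\<in>R. c k * D j k) * u j x $ i)" by (simp add: sum_distrib_right)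
    finally show ?thesis .
  qed
  then show ?thesis unfolding lc_def by (auto simp: vec_eq_iff)
qed

lemma lc_cong: "(\<And>j. j \<in> J \<Longrightarrow> u j = u' j) \<Longrightarrow> lc c J u = lc c J u'"
  unfolding lc_def by (auto intro!: ext sum.cong)

lemma lc_cong_coef: "(\<And>j. j \<in> J \<Longrightarrow> c j = c' j) \<Longrightarrow> lc c J u = lc c' J u"
  unfolding lc_def by (auto intro!: ext sum.cong)

lemma lc_delta: assumes "finite R" "k \<in> R" shows "lc (\<lambda>i. if i = k then 1 else 0) R w = w k"
proof -
  have "(\<Sum>j\<in>R. (if j = k then 1 else 0) * w j x $ i) = w k x $ i" for x i
  proof -
    have "(\<Sum>j\<in>R. (if j = k then 1 else 0) * w j x $ i) = (\<Sum>j\<in>R. if j = k then w j x $ i else 0)"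
      by (rule sum.cong) auto
    then show ?thesis using assms by simp
  qed
  then show ?thesis unfolding lc_def by (simp add: vec_eq_iff fun_eq_iff)
qed

lemma indep_unique:
  assumes "indep J u" "lc c J u = lc c' J u" "j \<in> J"
  shows "c j = c' j"
proof -
  have "lc (\<lambda>j. c j - c' j) J u = (\<lambda>_. 0)"
    using assms(2) unfolding lc_def
    by (auto simp: vec_eq_iff left_diff_distrib sum_subtractf fun_eq_iff)
  with assms(1,3) show ?thesis unfolding indep_def by force
qed

lemma trace_transfer:
  fixes us :: "'j \<Rightarrow> 'a \<Rightarrow> complex^'m::finite" and ws :: "'r \<Rightarrow> 'a \<Rightarrow> complex^'m"
  assumes fin: "finite J" "finite R" and iu: "indep J us" and iw: "indep R ws"
  and D: "\<forall>k\<in>R. ws k = lc (\<lambda>j. D j k) J us"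
  and C: "\<forall>j\<in>J. P (us j) = lc (\<lambda>k. C k j) R ws"
  and Pw: "\<forall>k\<in>R. P (ws k) = ws k"
  and Plin: "\<forall>c. P (lc c J us) = lc c J (\<lambda>j. P (us j))"
  and Tlin: "\<forall>c. T (lc c R ws) = lc c R (\<lambda>k. T (ws k))"
  and M: "\<forall>k\<in>R. T (ws k) = lc (\<lambda>i. M i k) R ws"
  and N: "\<forall>j\<in>J. T (P (us j)) = lc (\<lambda>l. N l j) J us"
  shows "(\<Sum>j\<in>J. N j j) = (\<Sum>k\<in>R. M k k)"
proof -
  have CD: "(\<Sum>j\<in>J. C i j * D j k) = (if i = k then 1 else 0)" if "k \<in> R" "i \<in> R" for i k
  proof -
    have "lc (\<lambda>i. if i = k then 1 else 0) R ws = ws k" by (rule lc_delta[OF fin(2) that(1)])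
    also have "\<dots> = P (ws k)" using Pw that by simp
    also have "\<dots> = P (lc (\<lambda>j. D j k) J us)" using D that by simp
    also have "\<dots> = lc (\<lambda>j. D j k) J (\<lambda>j. P (us j))" using Plin by blast
    also have "\<dots> = lc (\<lambda>j. D j k) J (\<lambda>j. lc (\<lambda>i. C i j) R ws)"
      by (rule lc_cong) (use C in simp)
    also have "\<dots> = lc (\<lambda>i. \<Sum>j\<in>J. D j k * C i j) R ws" by (rule lc_nested)
    finally have "lc (\<lambda>i. if i = k then 1 else 0) R ws = lc (\<lambda>i. \<Sum>j\<in>J. D j k * C i j) R ws" .
    from indep_unique[OF iw this that(2)] show ?thesis by (simp add: mult.commute)
  qed
  have NN: "N l j = (\<Sum>k\<in>R. (\<Sum>i\<in>R. C i j * M k i) * D l k)" if "j \<in> J" "l \<in> J" for l j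
  proof -
    have "lc (\<lambda>l. N l j) J us = T (P (us j))" using N that by simp
    also have "\<dots> = T (lc (\<lambda>k. C k j) R ws)" using C that by simp
    also have "\<dots> = lc (\<lambda>k. C k j) R (\<lambda>i. T (ws i))" using Tlin by blast
    also have "\<dots> = lc (\<lambda>k. C k j) R (\<lambda>i. lc (\<lambda>k. M k i) R ws)" by (rule lc_cong) (use M in simp)
    also have "\<dots> = lc (\<lambda>k. \<Sum>i\<in>R. C i j * M k i) R ws" by (rule lc_nested)
    also have "\<dots> = lc (\<lambda>k. \<Sum>i\<in>R. C i j * M k i) R (\<lambda>k. lc (\<lambda>l. D l k) J us)" by (rule lc_cong) (use D in simp)
    also have "\<dots> = lc (\<lambda>l. \<Sum>k\<in>R. (\<Sum>i\<in>R. C i j * M k i) * D l k) J us" by (rule lc_nested)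
    finally have "lc (\<lambda>l. N l j) J us = lc (\<lambda>l. \<Sum>k\<in>R. (\<Sum>i\<in>R. C i j * M k i) * D l k) J us" .
    from indep_unique[OF iu this that(2)] show ?thesis by simp
  qed
  have "(\<Sum>j\<in>J. N j j) = (\<Sum>j\<in>J. \<Sum>k\<in>R. \<Sum>i\<in>R. M k i * (C i j * D j k))"
    using NN by (intro sum.cong refl) (simp add: sum_distrib_right sum_distrib_left ac_simps)
  also have "\<dots> = (\<Sum>k\<in>R. \<Sum>i\<in>R. M k i * (\<Sum>j\<in>J. C i j * D j k))"
  proof -
    have "(\<Sum>j\<in>J. \<Sum>k\<in>R. \<Sum>i\<in>R. M k i * (C i j * D j k)) = (\<Sum>k\<in>R. \<Sum>j\<in>J. \<Sum>i\<in>R. M k i * (C i j * D j k))"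
      by (rule sum.swap)
    also have "\<dots> = (\<Sum>k\<in>R. \<Sum>i\<in>R. \<Sum>j\<in>J. M k i * (C i j * D j k))"
      by (rule sum.cong[OF refl], rule sum.swap)
    finally show ?thesis by (simp add: sum_distrib_left)
  qed
  also have "\<dots> = (\<Sum>k\<in>R. \<Sum>i\<in>R. M k i * (if i = k then 1 else 0))"
    using CD by (auto intro!: sum.cong)
  also have "\<dots> = (\<Sum>k\<in>R. M k k)" using fin by (simp add: if_distrib cong: if_cong)
  finally show ?thesis .
qed



lemma lincomb_lc: "lincomb c bs = lc c {..<length bs} (\<lambda>i. bs ! i)"
  unfolding lincomb_def lc_def by simp

lemma lincomb_Cons: "lincomb c (x # xs) = (\<lambda>Q. c 0 *s x Q + lincomb (\<lambda>i. c (Suc i)) xs Q)"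
  unfolding lincomb_def by (simp only: length_Cons sum.lessThan_Suc_shift) simp

lemma lincomb_comb: "lincomb (\<lambda>i. a * f i + g i) bs = (\<lambda>Q. a *s lincomb f bs Q + lincomb g bs Q)"
  unfolding lincomb_def
  by (simp add: vec_eq_iff fun_eq_iff sum.distrib sum_distrib_left distrib_right mult.assoc)

lemma lincomb_Nil: "lincomb c [] = (\<lambda>_. 0)"
  unfolding lincomb_def by simp

lemma extract_basis:
  fixes ls :: "('a \<Rightarrow> complex^'m::finite) list"
  shows "\<exists>bs. set bs \<subseteq> set ls \<and> indep {..<length bs} (\<lambda>i. bs ! i) \<and> (\<forall>c. \<exists>c'. lincomb c ls = lincomb c' bs)"
proof (induction ls)
  case Nil
  show ?case
    by (rule exI[of _ "[]"]) (simp add: indep_def lincomb_Nil)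
next
  case (Cons x ls)
  then obtain bs where bs: "set bs \<subseteq> set ls" "indep {..<length bs} (\<lambda>i. bs ! i)"
    "\<forall>c. \<exists>c'. lincomb c ls = lincomb c' bs" by blast
  show ?case
  proof (cases "\<exists>cx. x = lincomb cx bs")
    case True
    then obtain cx where cx: "x = lincomb cx bs" by blast
    have "\<exists>c'. lincomb c (x # ls) = lincomb c' bs" for c
    proof -
      obtain c'' where c'': "lincomb (\<lambda>i. c (Suc i)) ls = lincomb c'' bs" using bs(3) by blast
      have "lincomb c (x # ls) = lincomb (\<lambda>i. c 0 * cx i + c'' i) bs"
        unfolding lincomb_Cons lincomb_comb c'' cx ..
      then show ?thesis by blast
    qed
    then show ?thesis using bs(1,2) by (intro exI[of _ bs]) auto
  next
    case False
    have ind: "indep {..<length (x # bs)} (\<lambda>i. (x # bs) ! i)"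
      unfolding indep_def
    proof (intro allI impI ballI)
      fix c j assume c0: "lc c {..<length (x # bs)} (\<lambda>i. (x # bs) ! i) = (\<lambda>_. 0)" and j: "j \<in> {..<length (x # bs)}"
      then have z: "lincomb c (x # bs) = (\<lambda>_. 0)" by (simp add: lincomb_lc)
      have "c 0 = 0"
      proof (rule ccontr)
        assume nz: "c 0 \<noteq> 0"
        have "x = lincomb (\<lambda>i. (- 1 / c 0) * c (Suc i) + 0) bs"
        proof -
          have "lincomb (\<lambda>i. (- 1 / c 0) * c (Suc i) + 0) bs = (\<lambda>Q. (- 1 / c 0) *s lincomb (\<lambda>i. c (Suc i)) bs Q + lincomb (\<lambda>i. 0) bs Q)"
            by (rule lincomb_comb)
          moreover have "lincomb (\<lambda>i. 0) bs = (\<lambda>_. 0)" unfolding lincomb_def by simp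
          moreover have "c 0 *s x Q + lincomb (\<lambda>i. c (Suc i)) bs Q = 0" for Q
            using fun_cong[OF z, of Q] unfolding lincomb_Cons by simp
          ultimately show ?thesis using nz
            by (auto simp: fun_eq_iff vec_eq_iff field_simps add_eq_0_iff)
        qed
        then show False using False by blast
      qed
      then have "lincomb (\<lambda>i. c (Suc i)) bs = (\<lambda>_. 0)"
        using z unfolding lincomb_Cons by (simp add: fun_eq_iff)
      then have "\<forall>i\<in>{..<length bs}. c (Suc i) = 0"
        using bs(2) unfolding indep_def lincomb_lc by blast
      then show "c j = 0" using j \<open>c 0 = 0\<close> by (cases j) auto
    qed
    have "\<exists>c'. lincomb c (x # ls) = lincomb c' (x # bs)" for c
    proof -
      obtain c'' where c'': "lincomb (\<lambda>i. c (Suc i)) ls = lincomb c'' bs" using bs(3) by blast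
      have "lincomb c (x # ls) = lincomb (case_nat (c 0) c'') (x # bs)"
        unfolding lincomb_Cons c'' by simp
      then show ?thesis by blast
    qed
    then show ?thesis using bs(1) ind by (intro exI[of _ "x # bs"]) auto
  qed
qed



lemma sum_distinct_nth:
  assumes "distinct L"
  shows "(\<Sum>j\<in>set L. g j) = (\<Sum>i<length L. g (L ! i))"
  using assms by (simp add: sum.distinct_set_conv_list sum_list_sum_nth atLeast0LessThan)

lemma lc_list:
  assumes "distinct L" "set L = J"
  shows "lc c J u = lincomb (\<lambda>i. c (L ! i)) (map u L)"
  unfolding lc_def lincomb_def using assms(1) by (simp add: assms(2)[symmetric] sum_distinct_nth[OF assms(1)])

lemma trace_on_eval:
  assumes ex: "\<exists>bs. is_basis_of W bs"
  and pres: "\<forall>f\<in>W. T f \<in> W"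
  and all: "\<forall>bs M. is_basis_of W bs \<and> (\<forall>j<length bs. T (bs ! j) = lincomb (\<lambda>i. M i j) bs) \<longrightarrow> (\<Sum>j<length bs. M j j) = s"
  shows "trace_on W T = s"
  unfolding trace_on_def
proof (rule the_equality)
  show "\<forall>bs M. is_basis_of W bs \<and> (\<forall>j<length bs. T (bs ! j) = lincomb (\<lambda>i. M i j) bs) \<longrightarrow> s = (\<Sum>j<length bs. M j j)"
  proof (intro allI impI)
    fix bs M assume h: "is_basis_of W bs \<and> (\<forall>j<length bs. T (bs ! j) = lincomb (\<lambda>i. M i j) bs)"
    show "s = (\<Sum>j<length bs. M j j)" using all[rule_format, OF h] by simp
  qed
next
  fix s' assume s': "\<forall>bs M. is_basis_of W bs \<and> (\<forall>j<length bs. T (bs ! j) = lincomb (\<lambda>i. M i j) bs) \<longrightarrow> s' = (\<Sum>j<length bs. M j j)"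
  obtain bs where bs: "is_basis_of W bs" using ex by blast
  have "\<forall>j. \<exists>c. j < length bs \<longrightarrow> T (bs ! j) = lincomb c bs"
  proof
    fix j
    show "\<exists>c. j < length bs \<longrightarrow> T (bs ! j) = lincomb c bs"
    proof (cases "j < length bs")
      case True
      then have "bs ! j \<in> W" using bs unfolding is_basis_of_def by auto
      then have "T (bs ! j) \<in> W" using pres by blast
      then show ?thesis using bs unfolding is_basis_of_def by blast
    qed simp
  qed
  from choice[OF this] obtain Mc where Mc: "\<forall>j. j < length bs \<longrightarrow> T (bs ! j) = lincomb (Mc j) bs" by blast
  have h: "is_basis_of W bs \<and> (\<forall>j<length bs. T (bs ! j) = lincomb (\<lambda>i. (\<lambda>i j. Mc j i) i j) bs)"
    using bs Mc by simp
  have "s' = (\<Sum>j<length bs. (\<lambda>i j. Mc j i) j j)"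
    using s'[rule_format, OF h] .
  moreover have "(\<Sum>j<length bs. (\<lambda>i j. Mc j i) j j) = s"
    using all[rule_format, OF h] .
  ultimately show "s' = s" by simp
qed

lemma trace_on_via_proj:
  fixes us :: "'j \<Rightarrow> 'a \<Rightarrow> complex^'m::finite"
  assumes fin: "finite J" and iu: "indep J us"
  and Wsub: "\<forall>f\<in>W. \<exists>c. f = lc c J us"
  and PW: "\<forall>j\<in>J. P (us j) \<in> W"
  and Pid: "\<forall>f\<in>W. P f = f"
  and Plin: "\<forall>c. P (lc c J us) = lc c J (\<lambda>j. P (us j))"
  and Tlin: "\<forall>c (R::nat set) ws. T (lc c R ws) = lc c R (\<lambda>k. T (ws k))"
  and pres: "\<forall>f\<in>W. T f \<in> W"
  and N: "\<forall>j\<in>J. T (P (us j)) = lc (\<lambda>l. N l j) J us"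
  shows "trace_on W T = (\<Sum>j\<in>J. N j j)"
proof (rule trace_on_eval[OF _ pres])
  obtain L where L: "set L = J" "distinct L" using finite_distinct_list[OF fin] by blast
  obtain bs where bs: "set bs \<subseteq> set (map (\<lambda>j. P (us j)) L)" "indep {..<length bs} (\<lambda>i. bs ! i)"
    "\<forall>c. \<exists>c'. lincomb c (map (\<lambda>j. P (us j)) L) = lincomb c' bs"
    using extract_basis by blast
  have "is_basis_of W bs"
    unfolding is_basis_of_def
  proof (intro conjI)
    show "set bs \<subseteq> W" using bs(1) PW L(1) by auto
    show "\<forall>c. lincomb c bs = (\<lambda>x. 0) \<longrightarrow> (\<forall>i<length bs. c i = 0)"
      using bs(2) unfolding indep_def lincomb_lc by simp
    show "\<forall>f\<in>W. \<exists>c. f = lincomb c bs"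
    proof
      fix f assume f: "f \<in> W"
      then obtain c where c: "f = lc c J us" using Wsub by blast
      have "f = P f" using Pid f by simp
      also have "\<dots> = lc c J (\<lambda>j. P (us j))" using c Plin by simp
      also have "\<dots> = lincomb (\<lambda>i. c (L ! i)) (map (\<lambda>j. P (us j)) L)"
        by (rule lc_list[OF L(2,1)])
      finally have "f = lincomb (\<lambda>i. c (L ! i)) (map (\<lambda>j. P (us j)) L)" .
      moreover obtain c' where "lincomb (\<lambda>i. c (L ! i)) (map (\<lambda>j. P (us j)) L) = lincomb c' bs"
        using bs(3) by blast
      ultimately show "\<exists>c. f = lincomb c bs" by blast
    qed
  qed
  then show "\<exists>bs. is_basis_of W bs" by blast
next
  show "\<forall>bs M. is_basis_of W bs \<and> (\<forall>j<length bs. T (bs ! j) = lincomb (\<lambda>i. M i j) bs) \<longrightarrow>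
      (\<Sum>j<length bs. M j j) = (\<Sum>j\<in>J. N j j)"
  proof (intro allI impI, elim conjE)
    fix ws M assume ws: "is_basis_of W ws" and M: "\<forall>j<length ws. T (ws ! j) = lincomb (\<lambda>i. M i j) ws"
    let ?R = "{..<length ws}"
    have wsW: "\<forall>k\<in>?R. ws ! k \<in> W" using ws unfolding is_basis_of_def by (simp add: subset_iff)
    have iw: "indep ?R (\<lambda>k. ws ! k)" using ws unfolding is_basis_of_def indep_def lincomb_lc by simp
    have "\<forall>k\<in>?R. \<exists>c. ws ! k = lc c J us" using wsW Wsub by blast
    from bchoice[OF this] obtain D where D: "\<forall>k\<in>?R. ws ! k = lc (D k) J us" by blast
    have span: "\<forall>f\<in>W. \<exists>c. f = lincomb c ws" using ws by (simp add: is_basis_of_def)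
    have "\<forall>j\<in>J. \<exists>c. P (us j) = lincomb c ws"
    proof
      fix j assume "j \<in> J"
      then have "P (us j) \<in> W" using PW by blast
      then show "\<exists>c. P (us j) = lincomb c ws" using span by blast
    qed
    from bchoice[OF this] obtain C where C: "\<forall>j\<in>J. P (us j) = lincomb (C j) ws" by blast
    have "(\<Sum>j\<in>J. N j j) = (\<Sum>k\<in>?R. M k k)"
    proof (rule trace_transfer[where P=P and T=T and us=us and ws="\<lambda>k. ws ! k"
          and D="\<lambda>j k. D k j" and C="\<lambda>k j. C j k" and M=M and N=N])
      show "finite J" "finite ?R" "indep J us" "indep ?R (\<lambda>k. ws ! k)" using fin iu iw by auto
      show "\<forall>k\<in>?R. ws ! k = lc (\<lambda>j. D k j) J us" using D by simp
      show "\<forall>j\<in>J. P (us j) = lc (\<lambda>k. C j k) ?R (\<lambda>k. ws ! k)" using C by (simp add: lincomb_lc)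
      show "\<forall>k\<in>?R. P (ws ! k) = ws ! k" using wsW Pid by blast
      show "\<forall>c. P (lc c J us) = lc c J (\<lambda>j. P (us j))" by (rule Plin)
      show "\<forall>c. T (lc c ?R (\<lambda>k. ws ! k)) = lc c ?R (\<lambda>k. T (ws ! k))" using Tlin by blast
      show "\<forall>k\<in>?R. T (ws ! k) = lc (\<lambda>i. M i k) ?R (\<lambda>k. ws ! k)" using M by (simp add: lincomb_lc)
      show "\<forall>j\<in>J. T (P (us j)) = lc (\<lambda>l. N l j) J us" by (rule N)
    qed
    then show "(\<Sum>j<length ws. M j j) = (\<Sum>j\<in>J. N j j)" by simp
  qed
qed



lemma poly1_zero:
  fixes a :: "nat \<Rightarrow> complex"
  assumes fin: "finite K" and z: "\<forall>z. (\<Sum>k\<in>K. a k * z ^ k) = 0" and k: "k \<in> K"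
  shows "a k = 0"
proof -
  define p where "p = (\<Sum>k\<in>K. monom (a k) k)"
  have "\<forall>z. poly p z = 0" using z unfolding p_def by (simp add: poly_sum poly_monom)
  then have "p = 0" using poly_all_0_iff_0 by blast
  then have "coeff p k = 0" by simp
  moreover have "coeff p k = a k"
    unfolding p_def coeff_sum using fin k by (simp add: if_distrib cong: if_cong)
  ultimately show ?thesis by simp
qed

lemma mono_indep:
  fixes c :: "('v \<Rightarrow> nat) \<Rightarrow> complex"
  assumes "finite S"
  shows "finite E \<Longrightarrow> (\<forall>e\<in>E. \<forall>v. v \<notin> S \<longrightarrow> e v = 0) \<Longrightarrow>
    (\<forall>x::'v \<Rightarrow> complex. (\<Sum>e\<in>E. c e * (\<Prod>v\<in>S. x v ^ e v)) = 0) \<Longrightarrow> e \<in> E \<Longrightarrow> c e = 0"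
  using assms
proof (induction S arbitrary: E c e rule: finite_induct)
  case empty
  then have "E = {e}" by (auto simp: fun_eq_iff) (metis)
  then show ?case using empty(3) by simp
next
  case (insert v S)
  note finE = insert.prems(1) and supp = insert.prems(2) and zero = insert.prems(3) and eE = insert.prems(4)
  define k0 where "k0 = e v"
  define Ek where "Ek = {e'\<in>E. e' v = k0}"
  have grp: "(\<Sum>e'\<in>Ek. c e' * (\<Prod>u\<in>S. x u ^ e' u)) = 0" for x
  proof -
    let ?g = "\<lambda>k. (\<Sum>e'\<in>{e'\<in>E. e' v = k}. c e' * (\<Prod>u\<in>S. x u ^ e' u))"
    have "(\<Sum>k\<in>(\<lambda>e. e v) ` E. ?g k * z ^ k) = 0" for z
    proof -
      have "(\<Sum>k\<in>(\<lambda>e. e v) ` E. ?g k * z ^ k) = (\<Sum>k\<in>(\<lambda>e. e v) ` E. \<Sum>e'\<in>{e'\<in>E. e' v = k}. c e' * (\<Prod>u\<in>insert v S. (x(v:=z)) u ^ e' u))"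
      proof (rule sum.cong[OF refl])
        fix k
        have "(\<Prod>u\<in>insert v S. (x(v:=z)) u ^ e' u) = z ^ e' v * (\<Prod>u\<in>S. x u ^ e' u)" for e'
        proof -
          have "(\<Prod>u\<in>S. (x(v:=z)) u ^ e' u) = (\<Prod>u\<in>S. x u ^ e' u)"
            using insert.hyps(2) by (intro prod.cong) auto
          then show ?thesis using insert.hyps by simp
        qed
        then show "?g k * z ^ k = (\<Sum>e'\<in>{e'\<in>E. e' v = k}. c e' * (\<Prod>u\<in>insert v S. (x(v:=z)) u ^ e' u))"
          by (simp add: sum_distrib_left sum_distrib_right mult_ac)
      qed
      also have "\<dots> = (\<Sum>e'\<in>E. c e' * (\<Prod>u\<in>insert v S. (x(v:=z)) u ^ e' u))"
        by (rule sum.image_gen[symmetric]) (rule finE)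
      also have "\<dots> = 0" using zero by blast
      finally show ?thesis .
    qed
    then have "?g k0 = 0" using poly1_zero[of "(\<lambda>e. e v) ` E" ?g k0] finE eE k0_def by blast
    then show ?thesis unfolding Ek_def .
  qed
  define E' where "E' = (\<lambda>e'. e'(v:=0)) ` Ek"
  define c' where "c' = (\<lambda>f. c (f(v:=k0)))"
  have inj: "inj_on (\<lambda>e'. e'(v:=0)) Ek"
  proof (rule inj_onI)
    fix a b assume "a \<in> Ek" "b \<in> Ek" "a(v:=0) = b(v:=0)"
    then show "a = b" unfolding Ek_def by (auto simp: fun_eq_iff split: if_splits) (metis fun_upd_apply)
  qed
  have "c' (e(v:=0)) = 0"
  proof (rule insert.IH[of E' c'])
    show "finite E'" unfolding E'_def Ek_def using finE by simp
    show "\<forall>e\<in>E'. \<forall>u. u \<notin> S \<longrightarrow> e u = 0"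
      unfolding E'_def Ek_def using supp by auto
    show "e(v:=0) \<in> E'" unfolding E'_def Ek_def k0_def using eE by auto
    show "\<forall>x. (\<Sum>e\<in>E'. c' e * (\<Prod>u\<in>S. x u ^ e u)) = 0"
    proof
      fix x
      have "(\<Sum>e\<in>E'. c' e * (\<Prod>u\<in>S. x u ^ e u)) = (\<Sum>e'\<in>Ek. c' (e'(v:=0)) * (\<Prod>u\<in>S. x u ^ (e'(v:=0)) u))"
        unfolding E'_def by (rule sum.reindex[OF inj, unfolded comp_def])
      also have "\<dots> = (\<Sum>e'\<in>Ek. c e' * (\<Prod>u\<in>S. x u ^ e' u))"
      proof (rule sum.cong[OF refl])
        fix e' assume "e' \<in> Ek"
        then have "(e'(v:=0))(v:=k0) = e'" unfolding Ek_def by auto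
        moreover have "(\<Prod>u\<in>S. x u ^ (e'(v:=0)) u) = (\<Prod>u\<in>S. x u ^ e' u)"
          using insert.hyps(2) by (intro prod.cong) auto
        ultimately show "c' (e'(v:=0)) * (\<Prod>u\<in>S. x u ^ (e'(v:=0)) u) = c e' * (\<Prod>u\<in>S. x u ^ e' u)"
          unfolding c'_def by simp
      qed
      also have "\<dots> = 0" by (rule grp)
      finally show "(\<Sum>e\<in>E'. c' e * (\<Prod>u\<in>S. x u ^ e u)) = 0" .
    qed
  qed
  then show ?case unfolding c'_def k0_def by simp
qed



lemma finite_funs_in:
  assumes "finite B"
  shows "finite {f::'a::finite \<Rightarrow> 'b. \<forall>x. f x \<in> B}"
  using finite_set_of_finite_funs[of "UNIV::'a set" B] assms by simp

definition monoQ :: "('n::finite \<Rightarrow> 'n \<Rightarrow> nat) \<Rightarrow> complex^'n^'n \<Rightarrow> complex" where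
  "monoQ e Q = (\<Prod>i\<in>UNIV. \<Prod>j\<in>UNIV. (Q $ i $ j) ^ e i j)"

definition Ed :: "nat \<Rightarrow> ('n::finite \<Rightarrow> 'n \<Rightarrow> nat) set" where
  "Ed d = {e. (\<Sum>i\<in>UNIV. \<Sum>j\<in>UNIV. e i j) = d}"

definition ubas :: "('n::finite \<Rightarrow> 'n \<Rightarrow> nat) \<times> 'm::finite \<Rightarrow> complex^'n^'n \<Rightarrow> complex^'m" where
  "ubas p Q = (\<chi> l. if l = snd p then monoQ (fst p) Q else 0)"

lemma finite_Ed: "finite (Ed d :: ('n::finite \<Rightarrow> 'n \<Rightarrow> nat) set)"
proof -
  have "Ed d \<subseteq> {e::'n \<Rightarrow> 'n \<Rightarrow> nat. \<forall>i. e i \<in> {f. \<forall>j. f j \<in> {..d}}}"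
  proof (clarsimp simp: Ed_def)
    fix e :: "'n \<Rightarrow> 'n \<Rightarrow> nat" and i j
    have "e i j \<le> (\<Sum>j\<in>UNIV. e i j)" by (rule member_le_sum) auto
    also have "\<dots> \<le> (\<Sum>i\<in>UNIV. \<Sum>j\<in>UNIV. e i j)" by (rule member_le_sum) auto
    finally show "e i j \<le> (\<Sum>i\<in>UNIV. \<Sum>j\<in>UNIV. e i j)" .
  qed
  moreover have "finite {e::'n \<Rightarrow> 'n \<Rightarrow> nat. \<forall>i. e i \<in> {f. \<forall>j. f j \<in> {..d}}}"
    by (intro finite_funs_in) simp
  ultimately show ?thesis by (rule finite_subset)
qed

lemma lc_ubas_component:
  "(lc c (Ed d \<times> UNIV) ubas Q) $ l = (\<Sum>e\<in>Ed d. c (e, l) * monoQ e Q)"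
proof -
  have "(lc c (Ed d \<times> UNIV) ubas Q) $ l = (\<Sum>p\<in>Ed d \<times> UNIV. c p * (if l = snd p then monoQ (fst p) Q else 0))"
    unfolding lc_def ubas_def by simp
  also have "\<dots> = (\<Sum>e\<in>Ed d. \<Sum>k\<in>UNIV. c (e, k) * (if l = k then monoQ e Q else 0))"
    by (simp add: sum.cartesian_product case_prod_unfold)
  also have "\<dots> = (\<Sum>e\<in>Ed d. c (e, l) * monoQ e Q)"
  proof (rule sum.cong[OF refl])
    fix e
    have "(\<Sum>k\<in>UNIV. c (e, k) * (if l = k then monoQ e Q else 0)) = (\<Sum>k\<in>UNIV. if l = k then c (e, k) * monoQ e Q else 0)"
      by (rule sum.cong) auto
    then show "(\<Sum>k\<in>UNIV. c (e, k) * (if l = k then monoQ e Q else 0)) = c (e, l) * monoQ e Q" by simp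
  qed
  finally show ?thesis .
qed

lemma hom_poly_Ed: "hom_poly d p \<longleftrightarrow> (\<exists>c. p = (\<lambda>Q. \<Sum>e\<in>Ed d. c e * monoQ e Q))"
  by (simp add: hom_poly_def Ed_def monoQ_def)

lemma lc_ubas_PdV: "lc c (Ed d \<times> UNIV) (ubas :: _ \<Rightarrow> _ \<Rightarrow> complex^'m::finite) \<in> PdV d"
  unfolding PdV_def hom_poly_Ed mem_Collect_eq lc_ubas_component
  by (intro allI, rule_tac x="\<lambda>e. c (e, k)" in exI, rule refl)

lemma PdV_lc_ubas:
  assumes "(f :: complex^'n::finite^'n \<Rightarrow> complex^'m::finite) \<in> PdV d"
  shows "\<exists>c. f = lc c (Ed d \<times> UNIV) ubas"
proof -
  have "\<forall>k. \<exists>c. (\<lambda>Q. f Q $ k) = (\<lambda>Q. \<Sum>e\<in>Ed d. c e * monoQ e Q)"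
    using assms unfolding PdV_def hom_poly_Ed by blast
  from choice[OF this] obtain ck where ck: "\<forall>k. (\<lambda>Q. f Q $ k) = (\<lambda>Q. \<Sum>e\<in>Ed d. ck k e * monoQ e Q)" by blast
  have "f = lc (\<lambda>p. ck (snd p) (fst p)) (Ed d \<times> UNIV) ubas"
  proof (rule ext, subst vec_eq_iff, rule allI)
    fix Q l
    show "f Q $ l = lc (\<lambda>p. ck (snd p) (fst p)) (Ed d \<times> UNIV) ubas Q $ l"
      unfolding lc_ubas_component using fun_cong[OF spec[OF ck, of l], of Q] by simp
  qed
  then show ?thesis by blast
qed

lemma indep_ubas: "indep (Ed d \<times> UNIV) (ubas :: _ \<Rightarrow> complex^'n::finite^'n \<Rightarrow> complex^'m::finite)"
  unfolding indep_def
proof (intro allI impI ballI)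
  fix c p
  assume z: "lc c (Ed d \<times> UNIV) (ubas :: _ \<Rightarrow> complex^'n::finite^'n \<Rightarrow> complex^'m::finite) = (\<lambda>_. 0)"
    and p: "p \<in> (Ed d :: ('n \<Rightarrow> 'n \<Rightarrow> nat) set) \<times> (UNIV::'m set)"
  obtain e l where el: "p = (e, l)" by (cases p)
  have zl: "(\<Sum>e\<in>Ed d. c (e, l) * monoQ e Q) = 0" for Q :: "complex^'n^'n"
    using fun_cong[OF z, of Q] lc_ubas_component[of c d Q l] by simp
  let ?E = "(\<lambda>e. case_prod e) ` (Ed d :: ('n \<Rightarrow> 'n \<Rightarrow> nat) set)"
  have inj: "inj_on (\<lambda>e::'n \<Rightarrow> 'n \<Rightarrow> nat. case_prod e) (Ed d)"
    by (rule inj_onI) (metis curry_case_prod)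
  have "(\<lambda>f. c (curry f, l)) (case_prod e) = 0"
  proof (rule mono_indep[where S="UNIV::('n \<times> 'n) set" and E="?E"])
    show "finite (UNIV::('n \<times> 'n) set)" by simp
    show "finite ?E" using finite_Ed by blast
    show "\<forall>e\<in>?E. \<forall>v. v \<notin> UNIV \<longrightarrow> e v = 0" by simp
    show "case_prod e \<in> ?E" using p el by auto
    show "\<forall>x. (\<Sum>f\<in>?E. c (curry f, l) * (\<Prod>v\<in>UNIV. x v ^ f v)) = 0"
    proof
      fix x :: "'n \<times> 'n \<Rightarrow> complex"
      define Q :: "complex^'n^'n" where "Q = (\<chi> i j. x (i, j))"
      have "(\<Sum>f\<in>?E. c (curry f, l) * (\<Prod>v\<in>UNIV. x v ^ f v)) =
          (\<Sum>e\<in>Ed d. c (e, l) * (\<Prod>v\<in>UNIV. x v ^ case_prod e v))"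
        by (subst sum.reindex[OF inj]) simp
      also have "\<dots> = (\<Sum>e\<in>Ed d. c (e, l) * monoQ e Q)"
      proof (rule sum.cong[OF refl])
        fix e :: "'n \<Rightarrow> 'n \<Rightarrow> nat"
        have "monoQ e Q = (\<Prod>i\<in>UNIV. \<Prod>j\<in>UNIV. x (i,j) ^ e i j)" unfolding monoQ_def Q_def by simp
        also have "\<dots> = (\<Prod>(i,j)\<in>UNIV\<times>UNIV. x (i,j) ^ e i j)" by (rule prod.cartesian_product)
        also have "\<dots> = (\<Prod>v\<in>UNIV. x v ^ case_prod e v)" by (simp add: case_prod_unfold)
        finally show "c (e, l) * (\<Prod>v\<in>UNIV. x v ^ case_prod e v) = c (e, l) * monoQ e Q" by simp
      qed
      also have "\<dots> = 0" by (rule zl)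
      finally show "(\<Sum>f\<in>?E. c (curry f, l) * (\<Prod>v\<in>UNIV. x v ^ f v)) = 0" .
    qed
  qed
  then show "c p = 0" using el by simp
qed



lemma mv_comp: "(A *v x) $ i = (\<Sum>k\<in>UNIV. A $ i $ k * x $ k)"
  by (simp add: matrix_vector_mult_def)

lemma mm_comp: "(A ** B) $ i $ j = (\<Sum>k\<in>UNIV. A $ i $ k * B $ k $ j)"
  by (simp add: matrix_matrix_mult_def)

lemma mv_sum: "(A::complex^'n::finite^'m::finite) *v (\<Sum>j\<in>J. v j) = (\<Sum>j\<in>J. A *v v j)"
proof (subst vec_eq_iff, rule allI)
  fix i
  have "(\<Sum>k\<in>UNIV. A $ i $ k * (\<Sum>j\<in>J. v j $ k)) = (\<Sum>k\<in>UNIV. \<Sum>j\<in>J. A $ i $ k * v j $ k)"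
    by (simp add: sum_distrib_left)
  also have "\<dots> = (\<Sum>j\<in>J. \<Sum>k\<in>UNIV. A $ i $ k * v j $ k)" by (rule sum.swap)
  finally show "(A *v (\<Sum>j\<in>J. v j)) $ i = (\<Sum>j\<in>J. A *v v j) $ i" by (simp add: mv_comp)
qed

lemma mv_smult: "(A::complex^'n::finite^'m::finite) *v (c *s x) = c *s (A *v x)"
  by (rule vector_scalar_commute)

lemma perm_row:
  assumes "\<sigma> permutes (UNIV::'n::finite set)"
  shows "(perm_mat \<sigma> ** Q) $ i $ j = Q $ (inv \<sigma> i) $ j"
proof -
  have "(perm_mat \<sigma> ** Q) $ i $ j = (\<Sum>k\<in>UNIV. if k = inv \<sigma> i then Q $ k $ j else 0)"
    unfolding mm_comp perm_mat_def
  proof (rule sum.cong[OF refl])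
    fix k
    have "(i = \<sigma> k) = (k = inv \<sigma> i)" using permutes_inv_eq[OF assms, of i k] by auto
    then show "(\<chi> i j. if i = \<sigma> j then 1 else 0) $ i $ k * Q $ k $ j = (if k = inv \<sigma> i then Q $ k $ j else 0)"
      by simp
  qed
  then show ?thesis by simp
qed

lemma diag_col: "(Q ** diag_mat t) $ i $ j = Q $ i $ j * t $ j"
proof -
  have "(Q ** diag_mat t) $ i $ j = (\<Sum>k\<in>UNIV. if k = j then Q $ i $ k * t $ j else 0)"
    unfolding mm_comp diag_mat_def by (rule sum.cong) auto
  then show ?thesis by simp
qed

lemma monoQ_perm:
  assumes s: "\<sigma> permutes (UNIV::'n::finite set)"
  shows "monoQ e (perm_mat (inv \<sigma>) ** Q) = monoQ (\<lambda>i j. e (inv \<sigma> i) j) Q"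
proof -
  have si: "inv \<sigma> permutes UNIV" using permutes_inv[OF s] .
  have "monoQ e (perm_mat (inv \<sigma>) ** Q) = (\<Prod>i\<in>UNIV. \<Prod>j\<in>UNIV. (Q $ (\<sigma> i) $ j) ^ e i j)"
    unfolding monoQ_def perm_row[OF si] permutes_inv_inv[OF s] ..
  also have "\<dots> = (\<Prod>i\<in>UNIV. (\<lambda>i'. \<Prod>j\<in>UNIV. (Q $ i' $ j) ^ e (inv \<sigma> i') j) (\<sigma> i))"
    by (simp add: permutes_inverses[OF s])
  also have "\<dots> = (\<Prod>i\<in>UNIV. \<Prod>j\<in>UNIV. (Q $ i $ j) ^ e (inv \<sigma> i) j)"
    using prod.permute[OF s, of "\<lambda>i'. \<Prod>j\<in>UNIV. (Q $ i' $ j) ^ e (inv \<sigma> i') j"] by (simp add: comp_def)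
  finally show ?thesis unfolding monoQ_def .
qed

definition wt :: "complex^'n \<Rightarrow> ('n::finite \<Rightarrow> 'n \<Rightarrow> nat) \<Rightarrow> complex" where
  "wt t e = (\<Prod>j\<in>UNIV. (t $ j) ^ (\<Sum>i\<in>UNIV. e i j))"

lemma monoQ_diag: "monoQ e (Q ** diag_mat t) = monoQ e Q * wt t e"
proof -
  have "monoQ e (Q ** diag_mat t) = (\<Prod>i\<in>UNIV. \<Prod>j\<in>UNIV. (Q $ i $ j) ^ e i j * (t $ j) ^ e i j)"
    unfolding monoQ_def diag_col by (simp add: power_mult_distrib)
  also have "\<dots> = monoQ e Q * (\<Prod>i\<in>UNIV. \<Prod>j\<in>UNIV. (t $ j) ^ e i j)"
    unfolding monoQ_def by (simp add: prod.distrib)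
  also have "(\<Prod>i\<in>UNIV. \<Prod>j\<in>UNIV. (t $ j) ^ e i j) = wt t e"
    unfolding wt_def by (subst prod.swap) (simp add: power_sum)
  finally show ?thesis .
qed

lemma Ed_perm:
  assumes s: "\<sigma> permutes (UNIV::'n::finite set)" and e: "e \<in> Ed d"
  shows "(\<lambda>i j. e (inv \<sigma> i) j) \<in> Ed d"
proof -
  have si: "inv \<sigma> permutes UNIV" using permutes_inv[OF s] .
  have "(\<Sum>i\<in>UNIV. \<Sum>j\<in>UNIV. e (inv \<sigma> i) j) = (\<Sum>i\<in>UNIV. \<Sum>j\<in>UNIV. e i j)"
    using sum.permute[OF si, of "\<lambda>i. \<Sum>j\<in>UNIV. e i j"] by (simp add: comp_def)
  then show ?thesis using e unfolding Ed_def by simp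
qed

definition Pop :: "(('n::finite \<Rightarrow> 'n) \<Rightarrow> complex^'m::finite^'m) \<Rightarrow> (complex^'n^'n \<Rightarrow> complex^'m) \<Rightarrow> (complex^'n^'n \<Rightarrow> complex^'m)" where
  "Pop \<rho> f = (\<lambda>Q. (1 / of_nat (fact CARD('n))) *s (\<Sum>\<sigma>\<in>{\<sigma>. \<sigma> permutes UNIV}. \<rho> \<sigma> *v f (perm_mat (inv \<sigma>) ** Q)))"

lemma Pop_lin: "Pop \<rho> (lc c J u) = lc c J (\<lambda>j. Pop \<rho> (u j))"
proof (rule ext)
  fix Q
  let ?S = "{\<sigma>. \<sigma> permutes (UNIV::'a set)}"
  let ?a = "1 / of_nat (fact CARD('a)) :: complex"
  have "Pop \<rho> (lc c J u) Q = ?a *s (\<Sum>\<sigma>\<in>?S. \<Sum>j\<in>J. c j *s (\<rho> \<sigma> *v u j (perm_mat (inv \<sigma>) ** Q)))"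
    unfolding Pop_def lc_def by (simp add: mv_sum mv_smult)
  also have "\<dots> = ?a *s (\<Sum>j\<in>J. \<Sum>\<sigma>\<in>?S. c j *s (\<rho> \<sigma> *v u j (perm_mat (inv \<sigma>) ** Q)))"
    by (subst sum.swap) (rule refl)
  also have "\<dots> = lc c J (\<lambda>j. Pop \<rho> (u j)) Q"
    unfolding Pop_def lc_def
    by (simp add: vec_eq_iff sum_distrib_left mult_ac)
  finally show "Pop \<rho> (lc c J u) Q = lc c J (\<lambda>j. Pop \<rho> (u j)) Q" .
qed

lemma Top_lin: "Ind_act g (lc c J u) = lc c J (\<lambda>j. Ind_act g (u j))"
  unfolding Ind_act_def lc_def by simp



abbreviation Perms :: "('n::finite \<Rightarrow> 'n) set" where
  "Perms \<equiv> {\<sigma>. \<sigma> permutes UNIV}"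

lemma card_Perms: "card (Perms :: ('n::finite \<Rightarrow> 'n) set) = fact CARD('n)"
  by (rule card_permutations) auto

lemma Pop_equiv:
  assumes rep: "is_rep \<rho>" and tau: "\<tau> permutes (UNIV::'n::finite set)"
  shows "Pop \<rho> f (perm_mat \<tau> ** Q) = \<rho> \<tau> *v Pop \<rho> f Q"
proof -
  let ?a = "1 / of_nat (fact CARD('n)) :: complex"
  have key: "\<rho> (\<tau> \<circ> \<sigma>) *v f (perm_mat (inv (\<tau> \<circ> \<sigma>)) ** (perm_mat \<tau> ** Q)) = \<rho> \<tau> *v (\<rho> \<sigma> *v f (perm_mat (inv \<sigma>) ** Q))"
    if s: "\<sigma> permutes UNIV" for \<sigma>
  proof -
    have ts: "\<tau> \<circ> \<sigma> permutes UNIV" using permutes_compose[OF s tau] .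
    have its: "inv (\<tau> \<circ> \<sigma>) permutes UNIV" using permutes_inv[OF ts] .
    have is': "inv \<sigma> permutes UNIV" using permutes_inv[OF s] .
    have "perm_mat (inv (\<tau> \<circ> \<sigma>)) ** (perm_mat \<tau> ** Q) = perm_mat (inv \<sigma>) ** Q"
    proof (subst vec_eq_iff, rule allI, subst vec_eq_iff, rule allI)
      fix i j
      show "(perm_mat (inv (\<tau> \<circ> \<sigma>)) ** (perm_mat \<tau> ** Q)) $ i $ j = (perm_mat (inv \<sigma>) ** Q) $ i $ j"
        unfolding perm_row[OF its] perm_row[OF tau] perm_row[OF is'] permutes_inv_inv[OF ts] permutes_inv_inv[OF s]
        by (simp add: permutes_inverses[OF tau])
    qed
    moreover have "\<rho> (\<tau> \<circ> \<sigma>) = \<rho> \<tau> ** \<rho> \<sigma>" using rep s tau unfolding is_rep_def by blast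
    ultimately show ?thesis by (simp add: matrix_vector_mul_assoc)
  qed
  have "(\<Sum>\<sigma>\<in>Perms. \<rho> \<sigma> *v f (perm_mat (inv \<sigma>) ** (perm_mat \<tau> ** Q))) =
      (\<Sum>\<sigma>\<in>Perms. \<rho> (\<tau> \<circ> \<sigma>) *v f (perm_mat (inv (\<tau> \<circ> \<sigma>)) ** (perm_mat \<tau> ** Q)))"
    by (rule setum_permutations_compose_left[OF tau])
  also have "\<dots> = (\<Sum>\<sigma>\<in>Perms. \<rho> \<tau> *v (\<rho> \<sigma> *v f (perm_mat (inv \<sigma>) ** Q)))"
    by (rule sum.cong[OF refl]) (simp add: key)
  also have "\<dots> = \<rho> \<tau> *v (\<Sum>\<sigma>\<in>Perms. \<rho> \<sigma> *v f (perm_mat (inv \<sigma>) ** Q))"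
    by (rule mv_sum[symmetric])
  finally show ?thesis unfolding Pop_def by (simp add: mv_smult)
qed

lemma Pop_id:
  assumes rep: "is_rep \<rho>" and f: "f \<in> Ind d \<rho>"
  shows "Pop \<rho> f = (f :: complex^'n::finite^'n \<Rightarrow> complex^'m::finite)"
proof (rule ext)
  fix Q
  have each: "\<rho> \<sigma> *v f (perm_mat (inv \<sigma>) ** Q) = f Q" if s: "\<sigma> permutes UNIV" for \<sigma>
  proof -
    have is': "inv \<sigma> permutes UNIV" using permutes_inv[OF s] .
    have "f (perm_mat (inv \<sigma>) ** Q) = \<rho> (inv \<sigma>) *v f Q" using f is' unfolding Ind_def by blast
    moreover have "\<rho> \<sigma> ** \<rho> (inv \<sigma>) = mat 1"
    proof -
      have "\<rho> (\<sigma> \<circ> inv \<sigma>) = \<rho> \<sigma> ** \<rho> (inv \<sigma>)" using rep s is' unfolding is_rep_def by blast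
      moreover have "\<sigma> \<circ> inv \<sigma> = id" using permutes_inv_o(1)[OF s] .
      ultimately show ?thesis using rep unfolding is_rep_def by simp
    qed
    ultimately show ?thesis by (simp add: matrix_vector_mul_assoc)
  qed
  have "(\<Sum>\<sigma>\<in>Perms. \<rho> \<sigma> *v f (perm_mat (inv \<sigma>) ** Q)) = (\<Sum>\<sigma>\<in>(Perms::('n \<Rightarrow> 'n) set). f Q)"
    by (rule sum.cong[OF refl]) (simp add: each)
  moreover have "(1 / of_nat (fact CARD('n)) :: complex) *s (\<Sum>\<sigma>\<in>(Perms::('n \<Rightarrow> 'n) set). f Q) = f Q"
  proof -
    have nz: "fact CARD('n) \<noteq> (0::complex)" by simp
    have "((1 / of_nat (fact CARD('n)) :: complex) *s (\<Sum>\<sigma>\<in>(Perms::('n \<Rightarrow> 'n) set). f Q)) $ i = f Q $ i" for i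
    proof -
      have "((1 / of_nat (fact CARD('n)) :: complex) *s (\<Sum>\<sigma>\<in>(Perms::('n \<Rightarrow> 'n) set). f Q)) $ i
          = (1 / of_nat (fact CARD('n))) * (\<Sum>\<sigma>\<in>(Perms::('n \<Rightarrow> 'n) set). f Q $ i)"
        by (simp only: vector_smult_component sum_component)
      also have "\<dots> = f Q $ i" using nz by (simp add: card_Perms)
      finally show ?thesis .
    qed
    then show ?thesis by (simp add: vec_eq_iff)
  qed
  ultimately show "Pop \<rho> f Q = f Q" unfolding Pop_def by simp
qed

definition Pc :: "(('n::finite \<Rightarrow> 'n) \<Rightarrow> complex^'m::finite^'m) \<Rightarrow> ('n \<Rightarrow> 'n \<Rightarrow> nat) \<times> 'm \<Rightarrow> ('n \<Rightarrow> 'n \<Rightarrow> nat) \<times> 'm \<Rightarrow> complex" where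
  "Pc \<rho> p q = (1 / of_nat (fact CARD('n))) *
     (\<Sum>\<sigma>\<in>Perms. if fst p = (\<lambda>i j. fst q (inv \<sigma> i) j) then \<rho> \<sigma> $ snd p $ snd q else 0)"

lemma Pop_ubas:
  assumes e: "e \<in> Ed d"
  shows "Pop \<rho> (ubas (e, k)) = lc (\<lambda>p. Pc \<rho> p (e, k)) (Ed d \<times> UNIV) (ubas :: _ \<Rightarrow> complex^'n::finite^'n \<Rightarrow> complex^'m::finite)"
proof (rule ext, subst vec_eq_iff, rule allI)
  fix Q :: "complex^'n^'n" and l :: 'm
  let ?a = "1 / of_nat (fact CARD('n)) :: complex"
  have "Pop \<rho> (ubas (e, k)) Q $ l = ?a * (\<Sum>\<sigma>\<in>Perms. \<rho> \<sigma> $ l $ k * monoQ (\<lambda>i j. e (inv \<sigma> i) j) Q)"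
  proof -
    have "(\<rho> \<sigma> *v ubas (e, k) (perm_mat (inv \<sigma>) ** Q)) $ l = \<rho> \<sigma> $ l $ k * monoQ (\<lambda>i j. e (inv \<sigma> i) j) Q"
      if s: "\<sigma> permutes UNIV" for \<sigma>
    proof -
      have "(\<rho> \<sigma> *v ubas (e, k) (perm_mat (inv \<sigma>) ** Q)) $ l = (\<Sum>l'\<in>UNIV. if l' = k then \<rho> \<sigma> $ l $ l' * monoQ e (perm_mat (inv \<sigma>) ** Q) else 0)"
        unfolding mv_comp ubas_def by (rule sum.cong) auto
      also have "\<dots> = \<rho> \<sigma> $ l $ k * monoQ e (perm_mat (inv \<sigma>) ** Q)" by simp
      finally show ?thesis using monoQ_perm[OF s] by simp
    qed
    then show ?thesis unfolding Pop_def by simp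
  qed
  also have "\<dots> = ?a * (\<Sum>\<sigma>\<in>Perms. \<Sum>e'\<in>Ed d. if e' = (\<lambda>i j. e (inv \<sigma> i) j) then \<rho> \<sigma> $ l $ k * monoQ e' Q else 0)"
  proof -
    have "(\<Sum>e'\<in>Ed d. if e' = (\<lambda>i j. e (inv \<sigma> i) j) then \<rho> \<sigma> $ l $ k * monoQ e' Q else 0) = \<rho> \<sigma> $ l $ k * monoQ (\<lambda>i j. e (inv \<sigma> i) j) Q"
      if s: "\<sigma> permutes UNIV" for \<sigma>
    proof -
      have fin: "finite (Ed d :: ('n \<Rightarrow> 'n \<Rightarrow> nat) set)" by (rule finite_Ed)
      show ?thesis using Ed_perm[OF s e] by (simp add: sum.delta[OF fin])
    qed
    then show ?thesis by simp
  qed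
  also have "\<dots> = ?a * (\<Sum>e'\<in>Ed d. \<Sum>\<sigma>\<in>Perms. if e' = (\<lambda>i j. e (inv \<sigma> i) j) then \<rho> \<sigma> $ l $ k * monoQ e' Q else 0)"
    by (subst sum.swap) (rule refl)
  also have "\<dots> = (\<Sum>e'\<in>Ed d. Pc \<rho> (e', l) (e, k) * monoQ e' Q)"
    unfolding Pc_def sum_distrib_left sum_distrib_right
    by (rule sum.cong[OF refl], rule sum.cong[OF refl]) simp
  also have "\<dots> = lc (\<lambda>p. Pc \<rho> p (e, k)) (Ed d \<times> UNIV) ubas Q $ l"
    by (rule lc_ubas_component[symmetric])
  finally show "Pop \<rho> (ubas (e, k)) Q $ l = lc (\<lambda>p. Pc \<rho> p (e, k)) (Ed d \<times> UNIV) ubas Q $ l" .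
qed

lemma Top_ubas: "Ind_act (diag_mat t) (ubas p) = (\<lambda>Q. wt t (fst p) *s ubas p Q)"
  unfolding Ind_act_def ubas_def by (simp add: vec_eq_iff monoQ_diag mult.commute fun_eq_iff)

lemma Top_lc: "Ind_act (diag_mat t) (lc c J ubas) = lc (\<lambda>p. c p * wt t (fst p)) J ubas"
  by (simp only: Top_lin Top_ubas) (simp add: lc_def vector_smult_assoc mult.commute)

lemma Top_pres:
  assumes f: "f \<in> Ind d \<rho>"
  shows "Ind_act (diag_mat t) f \<in> Ind d \<rho>"
proof -
  have "f \<in> PdV d" using f unfolding Ind_def by blast
  then obtain c where c: "f = lc c (Ed d \<times> UNIV) ubas" using PdV_lc_ubas by blast
  have "Ind_act (diag_mat t) f \<in> PdV d" unfolding c Top_lc by (rule lc_ubas_PdV)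
  moreover have "Ind_act (diag_mat t) f (perm_mat \<sigma> ** Q) = \<rho> \<sigma> *v Ind_act (diag_mat t) f Q"
    if "\<sigma> permutes UNIV" for \<sigma> Q
    using f that unfolding Ind_def Ind_act_def by (simp add: matrix_mul_assoc[symmetric])
  ultimately show ?thesis unfolding Ind_def by blast
qed

lemma ch_Ind_formula:
  assumes rep: "is_rep \<rho>"
  shows "ch_Ind d \<rho> t = (\<Sum>p\<in>Ed d \<times> UNIV. Pc \<rho> p p * wt t (fst p))"
  unfolding ch_Ind_def
proof (rule trace_on_via_proj[where us=ubas and P="Pop \<rho>" and N="\<lambda>l j. Pc \<rho> l j * wt t (fst l)"])
  show "finite (Ed d \<times> (UNIV::'b set))" by (intro finite_cartesian_product finite_Ed) simp
  show "indep (Ed d \<times> UNIV) ubas" by (rule indep_ubas)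
  show "\<forall>f\<in>Ind d \<rho>. \<exists>c. f = lc c (Ed d \<times> UNIV) ubas"
    using PdV_lc_ubas unfolding Ind_def by blast
  show "\<forall>j\<in>Ed d \<times> UNIV. Pop \<rho> (ubas j) \<in> Ind d \<rho>"
  proof
    fix j assume j: "j \<in> (Ed d :: ('a \<Rightarrow> 'a \<Rightarrow> nat) set) \<times> (UNIV :: 'b set)"
    obtain e k where ek: "j = (e, k)" by (cases j)
    have "Pop \<rho> (ubas j) \<in> PdV d" using Pop_ubas[of e d \<rho> k] j ek lc_ubas_PdV by simp
    then show "Pop \<rho> (ubas j) \<in> Ind d \<rho>" unfolding Ind_def using Pop_equiv[OF rep] by blast
  qed
  show "\<forall>f\<in>Ind d \<rho>. Pop \<rho> f = f" using Pop_id[OF rep] by blast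
  show "\<forall>c. Pop \<rho> (lc c (Ed d \<times> UNIV) ubas) = lc c (Ed d \<times> UNIV) (\<lambda>j. Pop \<rho> (ubas j))"
    using Pop_lin by blast
  show "\<forall>c (R::nat set) ws. Ind_act (diag_mat t) (lc c R ws) = lc c R (\<lambda>k. Ind_act (diag_mat t) (ws k))"
    using Top_lin by blast
  show "\<forall>f\<in>Ind d \<rho>. Ind_act (diag_mat t) f \<in> Ind d \<rho>" using Top_pres by blast
  show "\<forall>j\<in>Ed d \<times> UNIV. Ind_act (diag_mat t) (Pop \<rho> (ubas j)) = lc (\<lambda>l. Pc \<rho> l j * wt t (fst l)) (Ed d \<times> UNIV) ubas"
  proof
    fix j assume j: "j \<in> (Ed d :: ('a \<Rightarrow> 'a \<Rightarrow> nat) set) \<times> (UNIV :: 'b set)"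
    obtain e k where ek: "j = (e, k)" by (cases j)
    show "Ind_act (diag_mat t) (Pop \<rho> (ubas j)) = lc (\<lambda>l. Pc \<rho> l j * wt t (fst l)) (Ed d \<times> UNIV) ubas"
      using Pop_ubas[of e d \<rho> k] j ek by (simp add: Top_lc)
  qed
qed



context
  fixes \<sigma> :: "'n::finite \<Rightarrow> 'n"
  assumes sp: "\<sigma> permutes UNIV"
begin

lemma perm_sigma: "permutation \<sigma>"
  unfolding permutation_permutes by (rule exI[of _ UNIV]) (simp add: sp)

lemma self_orb: "x \<in> orbit \<sigma> x"
  by (rule permutation_self_in_orbit[OF perm_sigma])

lemma orb_eq: assumes "y \<in> orbit \<sigma> x" shows "orbit \<sigma> y = orbit \<sigma> x"
proof
  show "orbit \<sigma> y \<subseteq> orbit \<sigma> x"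
  proof
    fix z assume "z \<in> orbit \<sigma> y"
    then show "z \<in> orbit \<sigma> x" by (rule orbit_trans) (rule assms)
  qed
  have xy: "x \<in> orbit \<sigma> y" using orbit_swap[OF self_orb assms] .
  show "orbit \<sigma> x \<subseteq> orbit \<sigma> y"
  proof
    fix z assume "z \<in> orbit \<sigma> x"
    then show "z \<in> orbit \<sigma> y" by (rule orbit_trans) (rule xy)
  qed
qed

lemma orb_step: "orbit \<sigma> (\<sigma> x) = orbit \<sigma> x"
  by (rule permutation_orbit_step[OF perm_sigma])

lemma inv_const_orb:
  assumes inv: "\<forall>i. e (\<sigma> i) = e i" and y: "y \<in> orbit \<sigma> x"
  shows "e y = e x"
  using y by (induction rule: orbit.induct) (auto simp: inv)

lemma cyc_facts:
  shows "finite (cycles \<sigma>)" "\<And>c. c \<in> cycles \<sigma> \<Longrightarrow> finite c \<and> card c > 0"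
    "\<And>c i. c \<in> cycles \<sigma> \<Longrightarrow> i \<in> c \<Longrightarrow> orbit \<sigma> i = c"
    "\<And>i. orbit \<sigma> i \<in> cycles \<sigma>"
proof -
  show "finite (cycles \<sigma>)" by simp
  show "finite c \<and> card c > 0" if cc: "c \<in> cycles \<sigma>" for c
  proof -
    obtain x where "c = orbit \<sigma> x" using cc unfolding cycles_def by blast
    then have "x \<in> c" using self_orb by simp
    then have "c \<noteq> {}" by blast
    then show ?thesis by (simp add: card_gt_0_iff)
  qed
  show "orbit \<sigma> i = c" if cc: "c \<in> cycles \<sigma>" and ic: "i \<in> c" for c i
  proof -
    obtain x where "c = orbit \<sigma> x" using cc unfolding cycles_def by blast
    then show ?thesis using orb_eq ic by simp
  qed
  show "orbit \<sigma> i \<in> cycles \<sigma>" for i unfolding cycles_def by blast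
qed

lemma sum_cycles: "(\<Sum>i\<in>UNIV. g i) = (\<Sum>c\<in>cycles \<sigma>. \<Sum>i\<in>c. g i)"
proof -
  have U: "\<Union>(cycles \<sigma>) = UNIV"
  proof (rule set_eqI)
    fix i
    have "i \<in> orbit \<sigma> i" by (rule self_orb)
    then show "i \<in> \<Union>(cycles \<sigma>) \<longleftrightarrow> i \<in> UNIV" using cyc_facts(4)[of i] by blast
  qed
  have "(\<Sum>i\<in>\<Union>(cycles \<sigma>). g i) = (\<Sum>c\<in>cycles \<sigma>. \<Sum>i\<in>c. g i)"
  proof (subst sum.Union_disjoint)
    show "\<forall>A\<in>cycles \<sigma>. finite A" by simp
    show "\<forall>A\<in>cycles \<sigma>. \<forall>B\<in>cycles \<sigma>. A \<noteq> B \<longrightarrow> A \<inter> B = {}"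
    proof (intro ballI impI)
      fix A B assume A: "A \<in> cycles \<sigma>" and B: "B \<in> cycles \<sigma>" and ne: "A \<noteq> B"
      show "A \<inter> B = {}"
      proof (rule ccontr)
        assume "A \<inter> B \<noteq> {}"
        then obtain z where "z \<in> A" "z \<in> B" by blast
        then have "orbit \<sigma> z = A" "orbit \<sigma> z = B" using cyc_facts(3)[OF A] cyc_facts(3)[OF B] by auto
        then show False using ne by simp
      qed
    qed
  qed simp
  then show ?thesis using U by simp
qed

lemma card_mult_set:
  assumes k: "(k::nat) > 0"
  shows "card {x::'a::finite \<Rightarrow> nat. (\<lambda>i. k * x i) = y} = (if \<forall>i. k dvd y i then 1 else 0)"
proof (cases "\<forall>i. k dvd y i")
  case True
  have "{x::'a \<Rightarrow> nat. (\<lambda>i. k * x i) = y} = {\<lambda>i. y i div k}"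
  proof (intro set_eqI iffI)
    fix x assume "x \<in> {x::'a \<Rightarrow> nat. (\<lambda>i. k * x i) = y}"
    then have kx: "\<And>i. k * x i = y i" by (auto simp: fun_eq_iff)
    have "x i = y i div k" for i
    proof -
      have "y i div k = k * x i div k" using kx by simp
      also have "\<dots> = x i" using k by simp
      finally show ?thesis by simp
    qed
    then show "x \<in> {\<lambda>i. y i div k}" by (auto simp: fun_eq_iff)
  next
    fix x assume "x \<in> {\<lambda>i. y i div k}"
    then show "x \<in> {x::'a \<Rightarrow> nat. (\<lambda>i. k * x i) = y}" using True by (auto simp: fun_eq_iff)
  qed
  then show ?thesis using True by simp
next
  case False
  have "{x::'a \<Rightarrow> nat. (\<lambda>i. k * x i) = y} = {}"
  proof (rule ccontr)
    assume "{x::'a \<Rightarrow> nat. (\<lambda>i. k * x i) = y} \<noteq> {}"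
    then obtain x :: "'a \<Rightarrow> nat" where "(\<lambda>i. k * x i) = y" by blast
    then have "\<forall>i. k dvd y i" by auto
    then show False using False by blast
  qed
  then show ?thesis using False by simp
qed

definition Bset :: "('n \<Rightarrow> nat) \<Rightarrow> ('n set \<Rightarrow> 'n \<Rightarrow> nat) set" where
  "Bset a = {b. (\<forall>c. c \<notin> cycles \<sigma> \<longrightarrow> b c = (\<lambda>_. 0)) \<and> (\<lambda>i. \<Sum>c\<in>cycles \<sigma>. b c i) = a}"

lemma finite_Bset: "finite (Bset a)"
proof -
  let ?s = "\<Sum>i\<in>UNIV. a i"
  have "Bset a \<subseteq> {b. \<forall>c. b c \<in> {f. \<forall>i. f i \<in> {..?s}}}"
  proof (rule subsetI)
    fix b :: "'n set \<Rightarrow> 'n \<Rightarrow> nat"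
    assume "b \<in> Bset a"
    then have out: "\<forall>c. c \<notin> cycles \<sigma> \<longrightarrow> b c = (\<lambda>_. 0)" and a: "(\<lambda>i. \<Sum>c\<in>cycles \<sigma>. b c i) = a"
      unfolding Bset_def by auto
    have "b c i \<le> ?s" for c i
    proof (cases "c \<in> cycles \<sigma>")
      case True
      have "b c i \<le> (\<Sum>c\<in>cycles \<sigma>. b c i)" by (rule member_le_sum) (use True in auto)
      also have "\<dots> = a i" using a by (auto simp: fun_eq_iff)
      also have "\<dots> \<le> ?s" by (rule member_le_sum) auto
      finally show ?thesis .
    next
      case False
      then show ?thesis using out by simp
    qed
    then show "b \<in> {b. \<forall>c. b c \<in> {f. \<forall>i. f i \<in> {..?s}}}" by simp
  qed
  moreover have "finite {b::'n set \<Rightarrow> 'n \<Rightarrow> nat. \<forall>c. b c \<in> {f. \<forall>i. f i \<in> {..?s}}}"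
    by (intro finite_funs_in) simp
  ultimately show ?thesis by (rule finite_subset)
qed

lemma K:
  "of_nat (card {e::'n \<Rightarrow> 'n \<Rightarrow> nat. (\<forall>i. e (\<sigma> i) = e i) \<and> (\<lambda>j. \<Sum>i\<in>UNIV. e i j) = a}) = p_cycle_type_H \<sigma> a"
proof -
  let ?C = "cycles \<sigma>"
  let ?Fix = "{e::'n \<Rightarrow> 'n \<Rightarrow> nat. (\<forall>i. e (\<sigma> i) = e i) \<and> (\<lambda>j. \<Sum>i\<in>UNIV. e i j) = a}"
  let ?Dv = "\<lambda>b. \<forall>c\<in>?C. \<forall>i. card c dvd b c i"
  let ?B' = "{b\<in>Bset a. ?Dv b}"
  have prod_eq: "(\<Prod>c\<in>?C. (of_nat (card {x::'n \<Rightarrow> nat. (\<lambda>i. card c * x i) = b c}) :: complex)) = (if ?Dv b then 1 else 0)" for b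
  proof -
    have "(\<Prod>c\<in>?C. (of_nat (card {x::'n \<Rightarrow> nat. (\<lambda>i. card c * x i) = b c}) :: complex))
        = (\<Prod>c\<in>?C. if \<forall>i. card c dvd b c i then 1 else 0)"
      by (rule prod.cong[OF refl]) (simp add: card_mult_set cyc_facts(2))
    also have "\<dots> = (if ?Dv b then 1 else 0)"
    proof (cases "?Dv b")
      case True then show ?thesis by simp
    next
      case False
      then obtain c where "c \<in> ?C" "\<not> (\<forall>i. card c dvd b c i)" by blast
      then show ?thesis using False by (subst prod_zero) auto
    qed
    finally show ?thesis .
  qed
  have "p_cycle_type_H \<sigma> a = (\<Sum>b\<in>Bset a. if ?Dv b then 1 else 0)"
    unfolding p_cycle_type_H_def mps_prod_def pk_H_def Bset_def[symmetric] using prod_eq by simp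
  also have "\<dots> = of_nat (card ?B')"
    using sum.inter_filter[OF finite_Bset, where g="\<lambda>_. (1::complex)" and P="?Dv"] by simp
  finally have rhs: "p_cycle_type_H \<sigma> a = of_nat (card ?B')" .
  define F where "F e = (\<lambda>c. if c \<in> ?C then (\<lambda>j. \<Sum>i\<in>c. e i j) else (\<lambda>_. 0))" for e :: "'n \<Rightarrow> 'n \<Rightarrow> nat"
  define G where "G b = (\<lambda>i j. b (orbit \<sigma> i) j div card (orbit \<sigma> i))" for b :: "'n set \<Rightarrow> 'n \<Rightarrow> nat"
  have Fc: "F e c j = card c * e i j" if e: "e \<in> ?Fix" and c: "c \<in> ?C" and i: "i \<in> c" for e c i j
  proof -
    have inv: "\<forall>i. e (\<sigma> i) = e i" using e by blast
    have "F e c j = (\<Sum>i'\<in>c. e i' j)" unfolding F_def using c by simp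
    also have "\<dots> = (\<Sum>i'\<in>c. e i j)"
    proof (rule sum.cong[OF refl])
      fix i' assume i': "i' \<in> c"
      have "orbit \<sigma> i = c" by (rule cyc_facts(3)[OF c i])
      then have "i' \<in> orbit \<sigma> i" using i' by simp
      then have "e i' = e i" by (rule inv_const_orb[OF inv])
      then show "e i' j = e i j" by simp
    qed
    also have "\<dots> = card c * e i j" by simp
    finally show ?thesis .
  qed
  have Gc: "(\<Sum>i\<in>c. G b i j) = b c j" if b: "b \<in> ?B'" and c: "c \<in> ?C" for b c j
  proof -
    have dv: "card c dvd b c j" using b c by blast
    have "(\<Sum>i\<in>c. G b i j) = (\<Sum>i\<in>c. b c j div card c)"
    proof (rule sum.cong[OF refl])
      fix i assume "i \<in> c"
      then have "orbit \<sigma> i = c" by (rule cyc_facts(3)[OF c])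
      then show "G b i j = b c j div card c" unfolding G_def by simp
    qed
    also have "\<dots> = card c * (b c j div card c)" by simp
    also have "\<dots> = b c j" using dv by simp
    finally show ?thesis .
  qed
  have "bij_betw F ?Fix ?B'"
  proof (rule bij_betw_byWitness[where f'=G])
    show "\<forall>e\<in>?Fix. G (F e) = e"
    proof
      fix e assume e: "e \<in> ?Fix"
      show "G (F e) = e"
      proof (rule ext, rule ext)
        fix i j
        have "F e (orbit \<sigma> i) j = card (orbit \<sigma> i) * e i j"
          using Fc[OF e cyc_facts(4) self_orb] .
        then show "G (F e) i j = e i j"
          unfolding G_def using cyc_facts(2)[OF cyc_facts(4)] by simp
      qed
    qed
    show "\<forall>b\<in>?B'. F (G b) = b"
    proof
      fix b assume b: "b \<in> ?B'"
      show "F (G b) = b"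
      proof (rule ext)
        fix c
        show "F (G b) c = b c"
        proof (cases "c \<in> ?C")
          case True
          then show ?thesis unfolding F_def using Gc[OF b True] by (simp add: fun_eq_iff)
        next
          case False
          then show ?thesis unfolding F_def using b by (simp add: Bset_def)
        qed
      qed
    qed
    show "F ` ?Fix \<subseteq> ?B'"
    proof
      fix b assume "b \<in> F ` ?Fix"
      then obtain e where e: "e \<in> ?Fix" and b: "b = F e" by blast
      have "(\<lambda>j. \<Sum>c\<in>?C. F e c j) = a"
      proof
        fix j
        have "(\<Sum>c\<in>?C. F e c j) = (\<Sum>c\<in>?C. \<Sum>i\<in>c. e i j)"
          unfolding F_def by (rule sum.cong[OF refl]) simp
        also have "\<dots> = (\<Sum>i\<in>UNIV. e i j)" by (rule sum_cycles[symmetric])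
        also have "\<dots> = a j" using e by (simp add: fun_eq_iff)
        finally show "(\<Sum>c\<in>?C. F e c j) = a j" .
      qed
      moreover have "\<forall>c. c \<notin> ?C \<longrightarrow> F e c = (\<lambda>_. 0)" unfolding F_def by simp
      moreover have dvF: "?Dv (F e)"
      proof (intro ballI allI)
        fix c j assume c: "c \<in> ?C"
        obtain i where "i \<in> c" using cyc_facts(2)[OF c] by (metis card_gt_0_iff ex_in_conv)
        then show "card c dvd F e c j" using Fc[OF e c] by simp
      qed
      ultimately have "F e \<in> Bset a" unfolding Bset_def by simp
      then show "b \<in> ?B'" using dvF b by simp
    qed
    show "G ` ?B' \<subseteq> ?Fix"
    proof
      fix e assume "e \<in> G ` ?B'"
      then obtain b where b: "b \<in> ?B'" and e: "e = G b" by blast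
      have "\<forall>i. e (\<sigma> i) = e i" unfolding e G_def by (simp add: orb_step)
      moreover have "(\<lambda>j. \<Sum>i\<in>UNIV. e i j) = a"
      proof
        fix j
        have "(\<Sum>i\<in>UNIV. e i j) = (\<Sum>c\<in>?C. \<Sum>i\<in>c. G b i j)" unfolding e by (rule sum_cycles)
        also have "\<dots> = (\<Sum>c\<in>?C. b c j)" by (rule sum.cong[OF refl]) (rule Gc[OF b])
        also have "\<dots> = a j" using b unfolding Bset_def by (simp add: fun_eq_iff)
        finally show "(\<Sum>i\<in>UNIV. e i j) = a j" .
      qed
      ultimately show "e \<in> ?Fix" by blast
    qed
  qed
  then have "card ?Fix = card ?B'" by (rule bij_betw_same_card)
  then show ?thesis using rhs by simp
qed

end



lemma fix_iff:
  assumes s: "\<sigma> permutes (UNIV::'n::finite set)"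
  shows "(e = (\<lambda>i j. e (inv \<sigma> i) j)) \<longleftrightarrow> (\<forall>i. e (\<sigma> i) = (e :: 'n \<Rightarrow> 'n \<Rightarrow> nat) i)"
proof
  assume h: "e = (\<lambda>i j. e (inv \<sigma> i) j)"
  show "\<forall>i. e (\<sigma> i) = e i"
  proof
    fix i
    have "e (\<sigma> i) = e (inv \<sigma> (\<sigma> i))" using fun_cong[OF h, of "\<sigma> i"] by (simp add: fun_eq_iff)
    then show "e (\<sigma> i) = e i" by (simp add: permutes_inverses[OF s])
  qed
next
  assume h: "\<forall>i. e (\<sigma> i) = e i"
  show "e = (\<lambda>i j. e (inv \<sigma> i) j)"
  proof (rule ext)
    fix i
    have "e (inv \<sigma> i) = e (\<sigma> (inv \<sigma> i))" using h by simp
    then show "e i = (\<lambda>j. e (inv \<sigma> i) j)" by (simp add: permutes_inverses[OF s])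
  qed
qed

definition Ad :: "nat \<Rightarrow> ('n::finite \<Rightarrow> nat) set" where
  "Ad d = {a. (\<Sum>i\<in>UNIV. a i) = d}"

lemma finite_Ad: "finite (Ad d :: ('n::finite \<Rightarrow> nat) set)"
proof -
  have "Ad d \<subseteq> {a::'n \<Rightarrow> nat. \<forall>i. a i \<in> {..d}}"
  proof (rule subsetI)
    fix a :: "'n \<Rightarrow> nat" assume "a \<in> Ad d"
    then have "(\<Sum>i\<in>UNIV. a i) = d" unfolding Ad_def by simp
    moreover have "a i \<le> (\<Sum>i\<in>UNIV. a i)" for i by (rule member_le_sum) auto
    ultimately show "a \<in> {a::'n \<Rightarrow> nat. \<forall>i. a i \<in> {..d}}" by simp
  qed
  moreover have "finite {a::'n \<Rightarrow> nat. \<forall>i. a i \<in> {..d}}" by (intro finite_funs_in) simp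
  ultimately show ?thesis by (rule finite_subset)
qed

lemma Z:
  assumes s: "\<sigma> permutes (UNIV::'n::finite set)"
  shows "(\<Sum>e\<in>{e\<in>Ed d. e = (\<lambda>i j. e (inv \<sigma> i) j)}. wt t e) =
    (\<Sum>a\<in>Ad d. p_cycle_type_H \<sigma> a * (\<Prod>i\<in>UNIV. (t $ i) ^ a i))"
proof -
  let ?F = "{e\<in>Ed d. e = (\<lambda>i j. e (inv \<sigma> i) j)}"
  let ?cs = "\<lambda>e::'n \<Rightarrow> 'n \<Rightarrow> nat. (\<lambda>j. \<Sum>i\<in>UNIV. e i j)"
  let ?tp = "\<lambda>a. (\<Prod>i\<in>UNIV. (t $ i) ^ a i)"
  have finF: "finite ?F" by (rule rev_finite_subset[OF finite_Ed]) auto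
  have csE: "?cs e \<in> Ad d \<longleftrightarrow> e \<in> Ed d" for e
  proof -
    have "(\<Sum>j\<in>UNIV. \<Sum>i\<in>UNIV. e i j) = (\<Sum>i\<in>UNIV. \<Sum>j\<in>UNIV. e i j)" by (rule sum.swap)
    then show ?thesis unfolding Ad_def Ed_def by simp
  qed
  have img: "?cs ` ?F \<subseteq> Ad d" using csE by auto
  have "(\<Sum>e\<in>?F. wt t e) = (\<Sum>e\<in>?F. ?tp (?cs e))" unfolding wt_def by simp
  also have "\<dots> = (\<Sum>a\<in>Ad d. \<Sum>e\<in>{e. e \<in> ?F \<and> ?cs e = a}. ?tp (?cs e))"
    by (rule sum.group[OF finF finite_Ad img, symmetric])
  also have "\<dots> = (\<Sum>a\<in>Ad d. p_cycle_type_H \<sigma> a * ?tp a)"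
  proof (rule sum.cong[OF refl])
    fix a :: "'n \<Rightarrow> nat" assume a: "a \<in> Ad d"
    have seteq: "{e. e \<in> ?F \<and> ?cs e = a} = {e. (\<forall>i. e (\<sigma> i) = e i) \<and> ?cs e = a}"
    proof (rule set_eqI)
      fix e :: "'n \<Rightarrow> 'n \<Rightarrow> nat"
      show "e \<in> {e. e \<in> ?F \<and> ?cs e = a} \<longleftrightarrow> e \<in> {e. (\<forall>i. e (\<sigma> i) = e i) \<and> ?cs e = a}"
        using fix_iff[OF s, of e] csE[of e] a by auto
    qed
    have "(\<Sum>e\<in>{e. e \<in> ?F \<and> ?cs e = a}. ?tp (?cs e)) = (\<Sum>e\<in>{e. e \<in> ?F \<and> ?cs e = a}. ?tp a)"
    proof (rule sum.cong[OF refl])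
      fix e assume "e \<in> {e. e \<in> ?F \<and> ?cs e = a}"
      then have h: "?cs e = a" by blast
      show "?tp (?cs e) = ?tp a" by (rule arg_cong[OF h])
    qed
    also have "\<dots> = of_nat (card {e. e \<in> ?F \<and> ?cs e = a}) * ?tp a" by simp
    also have "\<dots> = p_cycle_type_H \<sigma> a * ?tp a" unfolding seteq K[OF s] ..
    finally show "(\<Sum>e\<in>{e. e \<in> ?F \<and> ?cs e = a}. ?tp (?cs e)) = p_cycle_type_H \<sigma> a * ?tp a" .
  qed
  finally show ?thesis .
qed

theorem theorem8:
  fixes \<rho> :: "('n::finite \<Rightarrow> 'n) \<Rightarrow> complex^'m::finite^'m"
  assumes "is_rep \<rho>"
  shows "\<forall>d t. (\<forall>i. t $ i \<noteq> 0) \<longrightarrow>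
    ch_Ind d \<rho> t = (\<Sum>a\<in>{a::'n \<Rightarrow> nat. (\<Sum>i\<in>UNIV. a i) = d}. Frob_pleth_H \<rho> a * (\<Prod>i\<in>UNIV. (t $ i) ^ a i))"
proof (intro allI impI)
  fix d and t :: "complex^'n"
  let ?A = "1 / of_nat (fact CARD('n)) :: complex"
  let ?fx = "\<lambda>\<sigma> e. e = (\<lambda>i j. e (inv \<sigma> i) j)"
  let ?tp = "\<lambda>a. (\<Prod>i\<in>UNIV. (t $ i) ^ a i)"
  have "ch_Ind d \<rho> t = (\<Sum>p\<in>Ed d \<times> UNIV. Pc \<rho> p p * wt t (fst p))"
    by (rule ch_Ind_formula[OF assms])
  also have "\<dots> = (\<Sum>e\<in>Ed d. \<Sum>k\<in>UNIV. Pc \<rho> (e, k) (e, k) * wt t e)"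
    by (simp add: sum.cartesian_product case_prod_unfold)
  also have "\<dots> = (\<Sum>e\<in>Ed d. ?A * (\<Sum>\<sigma>\<in>Perms. if ?fx \<sigma> e then trace (\<rho> \<sigma>) * wt t e else 0))"
  proof (rule sum.cong[OF refl])
    fix e
    have "(\<Sum>k\<in>UNIV. Pc \<rho> (e, k) (e, k) * wt t e) =
        (\<Sum>k\<in>UNIV. ?A * (\<Sum>\<sigma>\<in>Perms. if ?fx \<sigma> e then \<rho> \<sigma> $ k $ k * wt t e else 0))"
    proof (rule sum.cong[OF refl])
      fix k
      have ifz: "(if P then x else 0) * y = (if P then x * y else (0::complex))" for P x y by simp
      show "Pc \<rho> (e, k) (e, k) * wt t e = ?A * (\<Sum>\<sigma>\<in>Perms. if ?fx \<sigma> e then \<rho> \<sigma> $ k $ k * wt t e else 0)"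
        unfolding Pc_def mult.assoc sum_distrib_right ifz by (simp cong: if_cong)
    qed
    also have "\<dots> = ?A * (\<Sum>\<sigma>\<in>Perms. \<Sum>k\<in>UNIV. if ?fx \<sigma> e then \<rho> \<sigma> $ k $ k * wt t e else 0)"
      by (rule trans[OF sum_distrib_left[symmetric]], rule arg_cong[where f="\<lambda>x. ?A * x"], rule sum.swap)
    also have "\<dots> = ?A * (\<Sum>\<sigma>\<in>Perms. if ?fx \<sigma> e then trace (\<rho> \<sigma>) * wt t e else 0)"
    proof (rule arg_cong[where f="\<lambda>x. ?A * x"], rule sum.cong[OF refl])
      fix \<sigma> :: "'n \<Rightarrow> 'n"
      show "(\<Sum>k\<in>UNIV. if ?fx \<sigma> e then \<rho> \<sigma> $ k $ k * wt t e else 0) = (if ?fx \<sigma> e then trace (\<rho> \<sigma>) * wt t e else 0)"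
        by (cases "?fx \<sigma> e") (simp_all add: trace_def sum_distrib_right)
    qed
    finally show "(\<Sum>k\<in>UNIV. Pc \<rho> (e, k) (e, k) * wt t e) =
        ?A * (\<Sum>\<sigma>\<in>Perms. if ?fx \<sigma> e then trace (\<rho> \<sigma>) * wt t e else 0)" .
  qed
  also have "\<dots> = ?A * (\<Sum>\<sigma>\<in>Perms. \<Sum>e\<in>Ed d. if ?fx \<sigma> e then trace (\<rho> \<sigma>) * wt t e else 0)"
    by (rule trans[OF sum_distrib_left[symmetric]], rule arg_cong[where f="\<lambda>x. ?A * x"], rule sum.swap)
  also have "\<dots> = ?A * (\<Sum>\<sigma>\<in>Perms. trace (\<rho> \<sigma>) * (\<Sum>e\<in>{e\<in>Ed d. ?fx \<sigma> e}. wt t e))"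
  proof -
    have fin: "finite (Ed d :: ('n \<Rightarrow> 'n \<Rightarrow> nat) set)" by (rule finite_Ed)
    show ?thesis
      by (simp add: sum.inter_filter[OF fin] sum_distrib_left if_distrib cong: if_cong)
  qed
  also have "\<dots> = ?A * (\<Sum>\<sigma>\<in>Perms. trace (\<rho> \<sigma>) * (\<Sum>a\<in>Ad d. p_cycle_type_H \<sigma> a * ?tp a))"
    by (rule arg_cong[where f="\<lambda>x. ?A * x"], rule sum.cong[OF refl]) (simp add: Z)
  also have "\<dots> = (\<Sum>a\<in>Ad d. Frob_pleth_H \<rho> a * ?tp a)"
  proof -
    have "?A * (\<Sum>\<sigma>\<in>Perms. trace (\<rho> \<sigma>) * (\<Sum>a\<in>Ad d. p_cycle_type_H \<sigma> a * ?tp a))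
        = ?A * (\<Sum>\<sigma>\<in>Perms. \<Sum>a\<in>Ad d. trace (\<rho> \<sigma>) * p_cycle_type_H \<sigma> a * ?tp a)"
      by (simp add: sum_distrib_left mult.assoc)
    also have "\<dots> = ?A * (\<Sum>a\<in>Ad d. \<Sum>\<sigma>\<in>Perms. trace (\<rho> \<sigma>) * p_cycle_type_H \<sigma> a * ?tp a)"
      by (rule arg_cong[where f="\<lambda>x. ?A * x"], rule sum.swap)
    also have "\<dots> = (\<Sum>a\<in>Ad d. Frob_pleth_H \<rho> a * ?tp a)"
      unfolding Frob_pleth_H_def character_def
      by (simp add: sum_distrib_left sum_distrib_right mult.assoc)
    finally show ?thesis .
  qed
  finally show "ch_Ind d \<rho> t = (\<Sum>a\<in>{a::'n \<Rightarrow> nat. (\<Sum>i\<in>UNIV. a i) = d}. Frob_pleth_H \<rho> a * ?tp a)"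
    unfolding Ad_def .
qed


end
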